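(* Let $d\ge1$, $\epsilon>0$ and $\delta\ge0$ with $C_d\delta<1$. Then Mechanism-1 is unbiased: for every $x\in[-1,1]^d$, $\mathbb{E}[\mathcal{M}(x)]=x$ (coordinatewise).
   Context: Fix an integer $d\ge 1$. Let $C_d=2^{d-1}$ if $d$ is odd and $C_d=2^{d-1}-\frac12\binom{d}{d/2}$ if $d$ is even. For $B>0$ and $v\in\{-1,1\}^d$ let $T^+(v)=\{y\in\{-B,B\}^d: y\cdot v>0\}$, $T^-(v)=\{y\in\{-B,B\}^d: y\cdot v\le 0\}$. For $\alpha\in[0,1]$, $\mathcal{M}_{\alpha,B}$ takes $x\in[-1,1]^d$, samples $V\in\{-1,1\}^d$ with independent coordinates $\mathbb{P}[V_j=\pm1]=\frac12\pm\frac12x_j$, independently samples $u\in\{0,1\}$ with $\mathbb{P}[u=1]=\alpha$, and outputs a uniformly random element of $T^+(V)$ if $u=1$ and of $T^-(V)$ if $u=0$. Mechanism-1 with parameters $\epsilon>0,\delta\ge0$ is $\mathcal{M}=\mathcal{M}_{\alpha_{\epsilon,\delta},B_{\epsilon,\delta}}$ where $\alpha_{\epsilon,\delta}=\frac{e^\epsilon+C_d\delta}{e^\epsilon+1}$ if $d$ is odd and $\alpha_{\epsilon,\delta}=\frac{e^\epsilon C_d+\delta C_d(2^d-C_d)}{(e^\epsilon-1)C_d+2^d}$ if $d$ is even, and $B_{\epsilon,\delta}=\frac{2^d+C_d(e^\epsilon-1)}{\binom{d-1}{(d-1)/2}(e^\epsilon+2^d\delta-1)}$ if $d$ is odd, $B_{\epsilon,\delta}=\frac{2^d+C_d(e^\epsilon-1)}{\binom{d-1}{d/2}(e^\epsilon+2^d\delta-1)}$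 if $d$ is even. *)

theory Defs
  imports "HOL-Probability.Probability"
begin

text \<open>Vectors in R^d / {-1,1}^d / {-B,B}^d are represented as functions nat => real,
  coordinates indexed by {..<d}, extensional (value undefined outside {..<d}).\<close>

definition C_const :: "nat \<Rightarrow> real" where
  "C_const d = (if odd d then 2 ^ (d - 1)
                else 2 ^ (d - 1) - real (d choose (d div 2)) / 2)"

definition dotp :: "nat \<Rightarrow> (nat \<Rightarrow> real) \<Rightarrow> (nat \<Rightarrow> real) \<Rightarrow> real" where
  "dotp d y v = (\<Sum>j<d. y j * v j)"

definition cube :: "nat \<Rightarrow> real \<Rightarrow> (nat \<Rightarrow> real) set" where
  "cube d B = PiE {..<d} (\<lambda>_. {-B, B})"

definition T_plus :: "nat \<Rightarrow> real \<Rightarrow> (nat \<Rightarrow> real) \<Rightarrow> (nat \<Rightarrow> real) set" where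
  "T_plus d B v = {y \<in> cube d B. dotp d y v > 0}"

definition T_minus :: "nat \<Rightarrow> real \<Rightarrow> (nat \<Rightarrow> real) \<Rightarrow> (nat \<Rightarrow> real) set" where
  "T_minus d B v = {y \<in> cube d B. dotp d y v \<le> 0}"

definition V_pmf :: "nat \<Rightarrow> (nat \<Rightarrow> real) \<Rightarrow> (nat \<Rightarrow> real) pmf" where
  "V_pmf d x = Pi_pmf {..<d} undefined
     (\<lambda>j. map_pmf (\<lambda>b. if b then 1 else -1) (bernoulli_pmf (1/2 + x j / 2)))"

definition mech :: "nat \<Rightarrow> real \<Rightarrow> real \<Rightarrow> (nat \<Rightarrow> real) \<Rightarrow> (nat \<Rightarrow> real) pmf" where
  "mech d \<alpha> B x =
     bind_pmf (V_pmf d x) (\<lambda>V.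
     bind_pmf (bernoulli_pmf \<alpha>) (\<lambda>u.
       if u then pmf_of_set (T_plus d B V) else pmf_of_set (T_minus d B V)))"

definition alpha_param :: "nat \<Rightarrow> real \<Rightarrow> real \<Rightarrow> real" where
  "alpha_param d \<epsilon> \<delta> =
     (if odd d then (exp \<epsilon> + C_const d * \<delta>) / (exp \<epsilon> + 1)
      else (exp \<epsilon> * C_const d + \<delta> * C_const d * (2 ^ d - C_const d))
           / ((exp \<epsilon> - 1) * C_const d + 2 ^ d))"

definition B_param :: "nat \<Rightarrow> real \<Rightarrow> real \<Rightarrow> real" where
  "B_param d \<epsilon> \<delta> =
     (if odd d then (2 ^ d + C_const d * (exp \<epsilon> - 1))
                    / (real ((d - 1) choose ((d - 1) div 2)) * (exp \<epsilon> + 2 ^ d * \<delta> - 1))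
      else (2 ^ d + C_const d * (exp \<epsilon> - 1))
                    / (real ((d - 1) choose (d div 2)) * (exp \<epsilon> + 2 ^ d * \<delta> - 1)))"

definition mechanism1 :: "nat \<Rightarrow> real \<Rightarrow> real \<Rightarrow> (nat \<Rightarrow> real) \<Rightarrow> (nat \<Rightarrow> real) pmf" where
  "mechanism1 d \<epsilon> \<delta> = mech d (alpha_param d \<epsilon> \<delta>) (B_param d \<epsilon> \<delta>)"

end

theory Submission
  imports Defs
begin


definition sgnj :: "nat \<Rightarrow> nat set \<Rightarrow> real" where
  "sgnj j A = (if j \<in> A then 1 else -1)"

lemma sum_sgnj:
  assumes "finite X"
  shows "(\<Sum>A\<in>X. sgnj j A) = real (card {A\<in>X. j \<in> A}) - real (card {A\<in>X. j \<notin> A})"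
proof -
  have "(\<Sum>A\<in>X. sgnj j A) = (\<Sum>A\<in>X \<inter> {A. j\<in>A}. 1) + (\<Sum>A\<in>X \<inter> - {A. j\<in>A}. -1)"
    unfolding sgnj_def by (rule sum.If_cases[OF assms])
  moreover have "X \<inter> {A. j\<in>A} = {A\<in>X. j \<in> A}" "X \<inter> - {A. j\<in>A} = {A\<in>X. j \<notin> A}" by auto
  ultimately show ?thesis by simp
qed

lemma card_PP:
  assumes "d \<ge> 1"
  shows "real (card {A. A \<subseteq> {..<d} \<and> d < 2 * card A}) = C_const d"
proof -
  let ?U = "{..<d::nat}"
  define PP where "PP = {A. A \<subseteq> ?U \<and> d < 2 * card A}"
  define LL where "LL = {A. A \<subseteq> ?U \<and> 2 * card A < d}"
  define EE where "EE = {A. A \<subseteq> ?U \<and> 2 * card A = d}"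
  have cd: "\<And>A. A \<subseteq> ?U \<Longrightarrow> card (?U - A) = d - card A"
    by (simp add: card_Diff_subset finite_subset)
  have cle: "\<And>A. A \<subseteq> ?U \<Longrightarrow> card A \<le> d"
    by (metis card_lessThan card_mono finite_lessThan)
  have "bij_betw (\<lambda>A. ?U - A) PP LL"
  proof (rule bij_betw_byWitness[where f'="\<lambda>A. ?U - A"])
    show "\<forall>a\<in>PP. ?U - (?U - a) = a" by (auto simp: PP_def)
    show "\<forall>a\<in>LL. ?U - (?U - a) = a" by (auto simp: LL_def)
    show "(\<lambda>A. ?U - A) ` PP \<subseteq> LL"
    proof
      fix B assume "B \<in> (\<lambda>A. ?U - A) ` PP"
      then obtain A where A: "A \<in> PP" "B = ?U - A" by auto
      then show "B \<in> LL" using cd[of A] cle[of A] by (auto simp: PP_def LL_def)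
    qed
    show "(\<lambda>A. ?U - A) ` LL \<subseteq> PP"
    proof
      fix B assume "B \<in> (\<lambda>A. ?U - A) ` LL"
      then obtain A where A: "A \<in> LL" "B = ?U - A" by auto
      then show "B \<in> PP" using cd[of A] cle[of A] by (auto simp: PP_def LL_def)
    qed
  qed
  hence cPL: "card PP = card LL" by (rule bij_betw_same_card)
  have "Pow ?U = PP \<union> LL \<union> EE" by (auto simp: PP_def LL_def EE_def)
  moreover have "finite PP" "finite LL" "finite EE"
    by (auto simp: PP_def LL_def EE_def intro: finite_subset[of _ "Pow ?U"])
  moreover have "PP \<inter> LL = {}" "(PP \<union> LL) \<inter> EE = {}"
    by (auto simp: PP_def LL_def EE_def)
  ultimately have "card (Pow ?U) = card PP + card LL + card EE"
    by (simp add: card_Un_disjoint)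
  hence tot: "2 ^ d = 2 * card PP + card EE" using cPL by (simp add: card_Pow)
  have cE: "card EE = (if even d then d choose (d div 2) else 0)"
  proof (cases "even d")
    case True
    hence "EE = {A. A \<subseteq> ?U \<and> card A = d div 2}" by (auto simp: EE_def)
    then show ?thesis using True n_subsets[of ?U "d div 2"] by simp
  next
    case False
    hence "EE = {}" by (auto simp: EE_def)
    then show ?thesis using False by simp
  qed
  have p: "(2::real) ^ d = 2 * 2 ^ (d - 1)" using assms
    by (metis Suc_diff_le diff_Suc_1 power_Suc)
  have "real (2 ^ d) = 2 * real (card PP) + real (card EE)" using tot by (metis of_nat_add of_nat_mult of_nat_numeral)
  then show ?thesis unfolding PP_def[symmetric] C_const_def using cE p by (cases "even d") auto
qed

lemma bij_insert_j:
  fixes j d :: nat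
  assumes "j < d"
  shows "bij_betw (insert j) {A. A \<subseteq> {..<d} \<and> j \<notin> A \<and> Q (card A + 1)}
                            {A. A \<subseteq> {..<d} \<and> j \<in> A \<and> Q (card A)}"
proof (rule bij_betw_byWitness[where f'="\<lambda>A. A - {j}"])
  show "\<forall>a\<in>{A. A \<subseteq> {..<d} \<and> j \<notin> A \<and> Q (card A + 1)}. insert j a - {j} = a" by auto
  show "\<forall>a\<in>{A. A \<subseteq> {..<d} \<and> j \<in> A \<and> Q (card A)}. insert j (a - {j}) = a" by auto
  show "insert j ` {A. A \<subseteq> {..<d} \<and> j \<notin> A \<and> Q (card A + 1)}
        \<subseteq> {A. A \<subseteq> {..<d} \<and> j \<in> A \<and> Q (card A)}"
  proof
    fix B assume "B \<in> insert j ` {A. A \<subseteq> {..<d} \<and> j \<notin> A \<and> Q (card A + 1)}"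
    then obtain A where A: "A \<subseteq> {..<d}" "j \<notin> A" "Q (card A + 1)" "B = insert j A" by auto
    have "finite A" using finite_subset[OF A(1)] by simp
    then show "B \<in> {A. A \<subseteq> {..<d} \<and> j \<in> A \<and> Q (card A)}" using A assms by auto
  qed
  show "(\<lambda>A. A - {j}) ` {A. A \<subseteq> {..<d} \<and> j \<in> A \<and> Q (card A)}
        \<subseteq> {A. A \<subseteq> {..<d} \<and> j \<notin> A \<and> Q (card A + 1)}"
  proof
    fix B assume "B \<in> (\<lambda>A. A - {j}) ` {A. A \<subseteq> {..<d} \<and> j \<in> A \<and> Q (card A)}"
    then obtain A where A: "A \<subseteq> {..<d}" "j \<in> A" "Q (card A)" "B = A - {j}" by auto
    have "finite A" using finite_subset[OF A(1)] by simp
    hence "card A = card B + 1" using A using card_Diff_singleton[of j A] card_gt_0_iff[of A] by force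
    then show "B \<in> {A. A \<subseteq> {..<d} \<and> j \<notin> A \<and> Q (card A + 1)}" using A by auto
  qed
qed

lemma sum_Pow:
  assumes "j < d"
  shows "(\<Sum>A\<in>Pow {..<d}. sgnj j A) = 0"
proof -
  have "card {A. A \<subseteq> {..<d} \<and> j \<notin> A \<and> True} = card {A. A \<subseteq> {..<d} \<and> j \<in> A \<and> True}"
    using bij_betw_same_card[OF bij_insert_j[OF assms, of "\<lambda>_. True"]] .
  moreover have "{A\<in>Pow {..<d}. j \<in> A} = {A. A \<subseteq> {..<d} \<and> j \<in> A \<and> True}"
       "{A\<in>Pow {..<d}. j \<notin> A} = {A. A \<subseteq> {..<d} \<and> j \<notin> A \<and> True}" by auto
  ultimately show ?thesis by (simp add: sum_sgnj)
qed

lemma sum_PP: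
  assumes "j < d"
  shows "(\<Sum>A\<in>{A. A \<subseteq> {..<d} \<and> d < 2 * card A}. sgnj j A) = real ((d - 1) choose (d div 2))"
proof -
  let ?U = "{..<d::nat}"
  define PP where "PP = {A. A \<subseteq> ?U \<and> d < 2 * card A}"
  have fin: "finite PP" by (auto simp: PP_def intro: finite_subset[of _ "Pow ?U"])
  have e0: "{A\<in>PP. j \<notin> A} = {A. A \<subseteq> ?U \<and> j \<notin> A \<and> (\<lambda>c. d + 2 < 2 * c) (card A + 1)}"
    by (auto simp: PP_def)
  define P2 where "P2 = {A. A \<subseteq> ?U \<and> j \<in> A \<and> (\<lambda>c. d + 2 < 2 * c) (card A)}"
  define E1 where "E1 = {A. A \<subseteq> ?U \<and> j \<in> A \<and> (\<lambda>c. c = d div 2 + 1) (card A)}"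
  have c0: "card {A\<in>PP. j \<notin> A} = card P2"
    unfolding e0 P2_def by (rule bij_betw_same_card[OF bij_insert_j[OF assms]])
  have e1: "{A\<in>PP. j \<in> A} = P2 \<union> E1"
  proof -
    have "\<And>c::nat. (d < 2 * c) = (d + 2 < 2 * c \<or> c = d div 2 + 1)" by presburger
    then show ?thesis by (auto simp: PP_def P2_def E1_def)
  qed
  have f2: "finite P2" "finite E1" by (auto simp: P2_def E1_def intro: finite_subset[of _ "Pow ?U"])
  have "\<And>c::nat. \<not> (d + 2 < 2 * c \<and> c = d div 2 + 1)" by presburger
  hence "P2 \<inter> E1 = {}" unfolding P2_def E1_def by blast
  hence c1: "card {A\<in>PP. j \<in> A} = card P2 + card E1" using e1 f2 by (simp add: card_Un_disjoint)
  have "card E1 = card {A. A \<subseteq> ?U \<and> j \<notin> A \<and> (\<lambda>c. c = d div 2 + 1) (card A + 1)}"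
    unfolding E1_def by (rule bij_betw_same_card[OF bij_insert_j[OF assms], symmetric])
  also have "{A. A \<subseteq> ?U \<and> j \<notin> A \<and> (\<lambda>c. c = d div 2 + 1) (card A + 1)}
           = {A. A \<subseteq> ?U - {j} \<and> card A = d div 2}" by auto
  also have "card \<dots> = (d - 1) choose (d div 2)"
    using n_subsets[of "?U - {j}" "d div 2"] assms by simp
  finally have "card E1 = (d - 1) choose (d div 2)" .
  moreover have "(\<Sum>A\<in>PP. sgnj j A) = real (card {A\<in>PP. j \<in> A}) - real (card {A\<in>PP. j \<notin> A})"
    by (rule sum_sgnj[OF fin])
  ultimately show ?thesis unfolding PP_def[symmetric] using c0 c1 by simp
qed

definition hmap :: "nat \<Rightarrow> real \<Rightarrow> (nat \<Rightarrow> real) \<Rightarrow> nat set \<Rightarrow> (nat \<Rightarrow> real)" where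
  "hmap d B v A = (\<lambda>i. if i < d then (if i \<in> A then B * v i else - B * v i) else undefined)"

lemma bij_restrict_pred:
  assumes "bij_betw h X Y"
  shows "bij_betw h {x\<in>X. Q (h x)} {y\<in>Y. Q y}"
proof -
  have "inj_on h {x\<in>X. Q (h x)}" using assms by (auto simp: bij_betw_def intro: inj_on_subset)
  moreover have "h ` {x\<in>X. Q (h x)} = {y\<in>Y. Q y}" using assms by (auto simp: bij_betw_def)
  ultimately show ?thesis by (simp add: bij_betw_def)
qed

lemma hmap_bij:
  assumes B: "B > 0" and v: "\<forall>i<d. v i \<in> {-1, 1}"
  shows "bij_betw (hmap d B v) (Pow {..<d}) (cube d B)"
proof (rule bij_betw_byWitness[where f'="\<lambda>y. {i. i < d \<and> y i = B * v i}"])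
  have ne: "\<And>i. i < d \<Longrightarrow> B * v i \<noteq> - B * v i" using B v by force
  show "\<forall>a\<in>Pow {..<d}. {i. i < d \<and> hmap d B v a i = B * v i} = a"
    using ne by (auto simp: hmap_def)
  show "\<forall>y\<in>cube d B. hmap d B v {i. i < d \<and> y i = B * v i} = y"
  proof
    fix y assume y: "y \<in> cube d B"
    show "hmap d B v {i. i < d \<and> y i = B * v i} = y"
    proof
      fix i
      show "hmap d B v {i. i < d \<and> y i = B * v i} i = y i"
      proof (cases "i < d")
        case True
        hence "y i \<in> {-B, B}" using y by (auto simp: cube_def PiE_def Pi_def)
        moreover have "v i \<in> {-1,1}" using v True by auto
        ultimately show ?thesis using True by (auto simp: hmap_def)
      next
        case False
        then show ?thesis using y by (auto simp: hmap_def cube_def PiE_def extensional_def)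
      qed
    qed
  qed
  have "\<And>i. i < d \<Longrightarrow> B * v i \<in> {-B, B} \<and> - B * v i \<in> {-B, B}"
  proof -
    fix i assume "i < d"
    hence "v i = -1 \<or> v i = 1" using v by auto
    then show "B * v i \<in> {-B, B} \<and> - B * v i \<in> {-B, B}" by auto
  qed
  note hb = this
  show "hmap d B v ` Pow {..<d} \<subseteq> cube d B"
  proof
    fix y assume "y \<in> hmap d B v ` Pow {..<d}"
    then obtain A where y: "y = hmap d B v A" by auto
    show "y \<in> cube d B" unfolding cube_def
    proof (rule PiE_I)
      fix i assume "i \<in> {..<d}"
      then show "y i \<in> {-B, B}" using hb[of i] unfolding y hmap_def by (simp only: lessThan_iff if_True) (cases "i \<in> A"; simp only: if_True if_False)
    next
      fix i assume "i \<notin> {..<d}"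
      then show "y i = undefined" unfolding y hmap_def by simp
    qed
  qed
  show "(\<lambda>y. {i. i < d \<and> y i = B * v i}) ` cube d B \<subseteq> Pow {..<d}" by auto
qed

lemma hmap_dotp:
  assumes v: "\<forall>i<d. v i \<in> {-1, 1}" and A: "A \<subseteq> {..<d}"
  shows "dotp d (hmap d B v A) v = B * (2 * real (card A) - real d)"
proof -
  have "dotp d (hmap d B v A) v = (\<Sum>i<d. if i \<in> A then B else - B)"
    unfolding dotp_def hmap_def
    by (rule sum.cong) (use v in \<open>auto\<close>)
  also have "\<dots> = (\<Sum>i\<in>{..<d} \<inter> {i. i\<in>A}. B) + (\<Sum>i\<in>{..<d} \<inter> - {i. i\<in>A}. - B)"
    by (rule sum.If_cases) simp
  also have "{..<d} \<inter> {i. i\<in>A} = A" using A by auto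
  also have "{..<d} \<inter> - {i. i\<in>A} = {..<d} - A" by auto
  also have "card ({..<d} - A) = d - card A" using A by (simp add: card_Diff_subset finite_subset)
  moreover have "card A \<le> d" using A by (metis card_lessThan card_mono finite_lessThan)
  ultimately show ?thesis by (simp add: algebra_simps of_nat_diff)
qed

lemma T_facts:
  assumes B: "B > 0" and v: "\<forall>i<d. v i \<in> {-1, 1}" and j: "j < d"
  shows "card (T_plus d B v) = card {A. A \<subseteq> {..<d} \<and> d < 2 * card A}"
    and "card (T_minus d B v) = card {A. A \<subseteq> {..<d} \<and> \<not> d < 2 * card A}"
    and "(\<Sum>y\<in>T_plus d B v. y j) = B * v j * real ((d - 1) choose (d div 2))"
    and "(\<Sum>y\<in>T_minus d B v. y j) = - (B * v j * real ((d - 1) choose (d div 2)))"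
proof -
  let ?h = "hmap d B v"
  have bij: "bij_betw ?h (Pow {..<d}) (cube d B)" by (rule hmap_bij[OF B v])
  have e1: "{A\<in>Pow {..<d}. 0 < dotp d (?h A) v} = {A. A \<subseteq> {..<d} \<and> d < 2 * card A}"
    using hmap_dotp[OF v] B by (auto simp: zero_less_mult_iff)
  have e2: "{A\<in>Pow {..<d}. dotp d (?h A) v \<le> 0} = {A. A \<subseteq> {..<d} \<and> \<not> d < 2 * card A}"
    using hmap_dotp[OF v] B by (auto simp: mult_le_0_iff)
  have b1: "bij_betw ?h {A. A \<subseteq> {..<d} \<and> d < 2 * card A} (T_plus d B v)"
    using bij_restrict_pred[OF bij, of "\<lambda>y. 0 < dotp d y v"] unfolding e1 T_plus_def .
  have b2: "bij_betw ?h {A. A \<subseteq> {..<d} \<and> \<not> d < 2 * card A} (T_minus d B v)"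
    using bij_restrict_pred[OF bij, of "\<lambda>y. dotp d y v \<le> 0"] unfolding e2 T_minus_def .
  show "card (T_plus d B v) = card {A. A \<subseteq> {..<d} \<and> d < 2 * card A}"
    using bij_betw_same_card[OF b1] by simp
  show "card (T_minus d B v) = card {A. A \<subseteq> {..<d} \<and> \<not> d < 2 * card A}"
    using bij_betw_same_card[OF b2] by simp
  have hj: "\<And>A. ?h A j = B * v j * sgnj j A" using j by (simp add: hmap_def sgnj_def)
  have sP: "(\<Sum>y\<in>T_plus d B v. y j) = (\<Sum>A\<in>{A. A \<subseteq> {..<d} \<and> d < 2 * card A}. B * v j * sgnj j A)"
    using sum.reindex_bij_betw[OF b1, of "\<lambda>y. y j"] hj by simp
  have sQ: "(\<Sum>y\<in>T_minus d B v. y j) = (\<Sum>A\<in>{A. A \<subseteq> {..<d} \<and> \<not> d < 2 * card A}. B * v j * sgnj j A)"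
    using sum.reindex_bij_betw[OF b2, of "\<lambda>y. y j"] hj by simp
  show "(\<Sum>y\<in>T_plus d B v. y j) = B * v j * real ((d - 1) choose (d div 2))"
    unfolding sP sum_distrib_left[symmetric] sum_PP[OF j] ..
  have "Pow {..<d} = {A. A \<subseteq> {..<d} \<and> d < 2 * card A} \<union> {A. A \<subseteq> {..<d} \<and> \<not> d < 2 * card A}" by auto
  moreover have "finite {A. A \<subseteq> {..<d} \<and> d < 2 * card A}" "finite {A. A \<subseteq> {..<d} \<and> \<not> d < 2 * card A}"
    by (rule finite_subset[of _ "Pow {..<d}"]; auto)+
  moreover have "{A. A \<subseteq> {..<d} \<and> d < 2 * card A} \<inter> {A. A \<subseteq> {..<d} \<and> \<not> d < 2 * card A} = {}" by blast
  ultimately have "(\<Sum>A\<in>Pow {..<d}. sgnj j A) = (\<Sum>A\<in>{A. A \<subseteq> {..<d} \<and> d < 2 * card A}. sgnj j A) + (\<Sum>A\<in>{A. A \<subseteq> {..<d} \<and> \<not> d < 2 * card A}. sgnj j A)"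
    by (simp only: sum.union_disjoint)
  hence "(\<Sum>A\<in>{A. A \<subseteq> {..<d} \<and> \<not> d < 2 * card A}. sgnj j A) = - real ((d - 1) choose (d div 2))"
    using sum_Pow[OF j] sum_PP[OF j] by simp
  then show "(\<Sum>y\<in>T_minus d B v. y j) = - (B * v j * real ((d - 1) choose (d div 2)))"
    unfolding sQ sum_distrib_left[symmetric] by simp
qed



lemma exp_bind_fin:
  fixes f :: "'b \<Rightarrow> real"
  assumes A: "finite A" "set_pmf M \<subseteq> A"
    and N: "\<And>a. a \<in> set_pmf M \<Longrightarrow> finite (set_pmf (N a))"
  shows "measure_pmf.expectation (bind_pmf M N) f = (\<Sum>a\<in>A. pmf M a * measure_pmf.expectation (N a) f)"
proof -
  define S where "S = (\<Union>a\<in>set_pmf M. set_pmf (N a))"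
  have fM: "finite (set_pmf M)" using A finite_subset by blast
  have fS: "finite S" unfolding S_def using fM N by blast
  have "measure_pmf.expectation (bind_pmf M N) f = (\<Sum>y\<in>S. pmf (bind_pmf M N) y *\<^sub>R f y)"
    by (rule integral_measure_pmf[OF fS]) (auto simp: S_def)
  also have "\<dots> = (\<Sum>y\<in>S. (\<Sum>a\<in>A. pmf M a * pmf (N a) y) * f y)"
  proof (rule sum.cong[OF refl])
    fix y
    have "pmf (bind_pmf M N) y = (\<Sum>a\<in>A. pmf M a *\<^sub>R pmf (N a) y)"
      unfolding pmf_bind by (rule integral_measure_pmf[OF A(1)]) (use A(2) in auto)
    then show "pmf (bind_pmf M N) y *\<^sub>R f y = (\<Sum>a\<in>A. pmf M a * pmf (N a) y) * f y" by simp
  qed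
  also have "\<dots> = (\<Sum>a\<in>A. pmf M a * (\<Sum>y\<in>S. pmf (N a) y * f y))"
    by (simp add: sum_distrib_right sum_distrib_left mult.assoc sum.swap[of _ S A])
  also have "\<dots> = (\<Sum>a\<in>A. pmf M a * measure_pmf.expectation (N a) f)"
  proof (rule sum.cong[OF refl])
    fix a assume "a \<in> A"
    show "pmf M a * (\<Sum>y\<in>S. pmf (N a) y * f y) = pmf M a * measure_pmf.expectation (N a) f"
    proof (cases "a \<in> set_pmf M")
      case True
      have "measure_pmf.expectation (N a) f = (\<Sum>y\<in>S. pmf (N a) y *\<^sub>R f y)"
        by (rule integral_measure_pmf[OF fS]) (use True in \<open>auto simp: S_def\<close>)
      then show ?thesis by simp
    next
      case False
      then show ?thesis by (simp add: set_pmf_eq)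
    qed
  qed
  finally show ?thesis .
qed

lemma alg_odd:
  fixes e C K \<delta> :: real
  assumes "e > 1" "C > 0" "K > 0" "\<delta> \<ge> 0" "C * \<delta> < 1"
  defines "\<alpha> \<equiv> (e + C * \<delta>) / (e + 1)"
    and "B \<equiv> (2 * C + C * (e - 1)) / (K * (e + 2 * C * \<delta> - 1))"
  shows "B * K * (\<alpha> / C - (1 - \<alpha>) / (2 * C - C)) = 1" "0 \<le> \<alpha>" "\<alpha> \<le> 1" "B > 0"
proof -
  have p: "e + 2 * C * \<delta> - 1 > 0" using assms by (smt (verit) mult_nonneg_nonneg)
  have a1: "\<alpha> / C - (1 - \<alpha>) / (2 * C - C) = (e + 2 * C * \<delta> - 1) / ((e + 1) * C)"
  proof -
    have ne: "e + 1 \<noteq> 0" "C \<noteq> 0" using assms by auto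
    have "2 * \<alpha> - 1 = (e + 2 * C * \<delta> - 1) / (e + 1)"
      unfolding \<alpha>_def using ne by (simp add: field_simps)
    moreover have "\<alpha> / C - (1 - \<alpha>) / (2 * C - C) = (2 * \<alpha> - 1) / C"
      using ne by (simp add: field_simps)
    ultimately show ?thesis by simp
  qed
  have b1: "B = C * (e + 1) / (K * (e + 2 * C * \<delta> - 1))"
    unfolding B_def by (simp add: algebra_simps)
  show "B * K * (\<alpha> / C - (1 - \<alpha>) / (2 * C - C)) = 1"
  proof -
    have ne: "K \<noteq> 0" "e + 2 * C * \<delta> - 1 \<noteq> 0" "e + 1 \<noteq> 0" "C \<noteq> 0" using assms p by auto
    show ?thesis unfolding a1 b1 using ne by simp
  qed
  show "0 \<le> \<alpha>" unfolding \<alpha>_def using assms by (simp add: mult_nonneg_nonneg)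
  show "\<alpha> \<le> 1" unfolding \<alpha>_def using assms by (simp add: field_simps)
  have "C * (e - 1) > 0" using assms by simp
  hence "2 * C + C * (e - 1) > 0" using assms by linarith
  moreover have "K * (e + 2 * C * \<delta> - 1) > 0" using assms p by simp
  ultimately show "B > 0" unfolding B_def by (rule divide_pos_pos)
qed

lemma alg_even:
  fixes e C K N \<delta> :: real
  assumes "e > 1" "C > 0" "N > C" "K > 0" "\<delta> \<ge> 0" "C * \<delta> < 1"
  defines "\<alpha> \<equiv> (e * C + \<delta> * C * (N - C)) / ((e - 1) * C + N)"
    and "B \<equiv> (N + C * (e - 1)) / (K * (e + N * \<delta> - 1))"
  shows "B * K * (\<alpha> / C - (1 - \<alpha>) / (N - C)) = 1" "0 \<le> \<alpha>" "\<alpha> \<le> 1" "B > 0"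
proof -
  have "N * \<delta> \<ge> 0" using assms by simp
  hence p: "e + N * \<delta> - 1 > 0" using assms by linarith
  have "(e - 1) * C > 0" using assms by simp
  hence D: "(e - 1) * C + N > 0" using assms by linarith
  have dc: "\<delta> * C \<le> 1" using assms by (simp add: mult.commute)
  have nc: "\<delta> * C * (N - C) \<le> N - C" using mult_right_mono[OF dc, of "N - C"] assms by simp
  define Dn where "Dn = (e - 1) * C + N"
  have ne: "Dn \<noteq> 0" "C \<noteq> 0" "N - C \<noteq> 0" "K \<noteq> 0" "e + N * \<delta> - 1 \<noteq> 0" using D p assms by (auto simp: Dn_def)
  have a: "\<alpha> = C * (e + \<delta> * (N - C)) / Dn" unfolding \<alpha>_def Dn_def by (simp add: algebra_simps)
  have a2: "1 - \<alpha> = (N - C) * (1 - C * \<delta>) / Dn"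
    unfolding a using ne by (simp add: field_simps) (simp add: Dn_def algebra_simps)
  have "\<alpha> / C - (1 - \<alpha>) / (N - C) = (e + \<delta> * (N - C)) / Dn - (1 - C * \<delta>) / Dn"
    unfolding a2 unfolding a using ne by simp
  also have "\<dots> = (e + N * \<delta> - 1) / Dn" by (simp add: diff_divide_distrib[symmetric] algebra_simps)
  finally have x: "\<alpha> / C - (1 - \<alpha>) / (N - C) = (e + N * \<delta> - 1) / Dn" .
  have b: "B = Dn / (K * (e + N * \<delta> - 1))" unfolding B_def Dn_def by (simp add: algebra_simps)
  show "B * K * (\<alpha> / C - (1 - \<alpha>) / (N - C)) = 1" unfolding x b using ne by simp
  show "0 \<le> \<alpha>" unfolding a using assms D Dn_def by simp
  have "C * (e + \<delta> * (N - C)) \<le> Dn" unfolding Dn_def using nc by (simp add: algebra_simps)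
  then show "\<alpha> \<le> 1" unfolding a using D Dn_def by simp
  have "K * (e + N * \<delta> - 1) > 0" using assms p by simp
  then show "B > 0" unfolding b using D Dn_def by (simp add: divide_pos_pos)
qed

lemma inner_exp:
  assumes B: "B > 0" and v: "\<forall>i<d. v i \<in> {-1, 1}" and j: "j < d"
    and a: "0 \<le> \<alpha>" "\<alpha> \<le> 1"
    and cP: "real (card {A. A \<subseteq> {..<d} \<and> d < 2 * card A}) = C"
    and cQ: "real (card {A. A \<subseteq> {..<d} \<and> \<not> d < 2 * card A}) = N - C"
    and C: "C > 0" "N - C > 0"
    and key: "B * K * (\<alpha> / C - (1 - \<alpha>) / (N - C)) = 1"
    and K: "K = real ((d - 1) choose (d div 2))"
  shows "measure_pmf.expectation (bind_pmf (bernoulli_pmf \<alpha>) (\<lambda>u.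
       if u then pmf_of_set (T_plus d B v) else pmf_of_set (T_minus d B v))) (\<lambda>y. y j) = v j"
proof -
  have fc: "finite (cube d B)" unfolding cube_def by (rule finite_PiE) auto
  have fP: "finite (T_plus d B v)" "finite (T_minus d B v)"
    using fc by (auto simp: T_plus_def T_minus_def)
  have cTP: "real (card (T_plus d B v)) = C" using T_facts(1)[OF B v j] cP by simp
  have cTM: "real (card (T_minus d B v)) = N - C" using T_facts(2)[OF B v j] cQ by simp
  have nP: "T_plus d B v \<noteq> {}" using cTP C by auto
  have nM: "T_minus d B v \<noteq> {}" using cTM C by auto
  have "measure_pmf.expectation (bind_pmf (bernoulli_pmf \<alpha>) (\<lambda>u.
       if u then pmf_of_set (T_plus d B v) else pmf_of_set (T_minus d B v))) (\<lambda>y. y j)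
     = (\<Sum>u\<in>UNIV. pmf (bernoulli_pmf \<alpha>) u * measure_pmf.expectation
          (if u then pmf_of_set (T_plus d B v) else pmf_of_set (T_minus d B v)) (\<lambda>y. y j))"
    by (rule exp_bind_fin) (use fP nP nM in auto)
  also have "\<dots> = \<alpha> * ((\<Sum>y\<in>T_plus d B v. y j) / C) + (1 - \<alpha>) * ((\<Sum>y\<in>T_minus d B v. y j) / (N - C))"
    using a fP nP nM cTP cTM by (simp add: UNIV_bool integral_pmf_of_set)
  also have "\<dots> = v j * (B * K * (\<alpha> / C - (1 - \<alpha>) / (N - C)))"
    unfolding T_facts(3)[OF B v j] T_facts(4)[OF B v j] K[symmetric] by (simp add: field_simps)
  also have "\<dots> = v j" using key by simp
  finally show ?thesis .
qed

theorem lemma3: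
  fixes d :: nat and \<epsilon> \<delta> :: real and x :: "nat \<Rightarrow> real"
  assumes "d \<ge> 1" and "\<epsilon> > 0" and "\<delta> \<ge> 0" and "C_const d * \<delta> < 1"
    and "\<forall>j<d. -1 \<le> x j \<and> x j \<le> 1"
  shows "\<forall>j<d. measure_pmf.expectation (mechanism1 d \<epsilon> \<delta> x) (\<lambda>y. y j) = x j"
proof (intro allI impI)
  fix j assume j: "j < d"
  define C where "C = C_const d"
  define N where "N = (2::real) ^ d"
  define K where "K = real ((d - 1) choose (d div 2))"
  define e where "e = exp \<epsilon>"
  define \<alpha> where "\<alpha> = alpha_param d \<epsilon> \<delta>"
  define B where "B = B_param d \<epsilon> \<delta>"
  define PP where "PP = {A. A \<subseteq> {..<d} \<and> d < 2 * card A}"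
  define QQ where "QQ = {A. A \<subseteq> {..<d} \<and> \<not> d < 2 * card A}"
  have cPP: "real (card PP) = C" using card_PP[OF assms(1)] by (simp add: PP_def C_def)
  have fPQ: "finite PP" "finite QQ"
    by (rule finite_subset[of _ "Pow {..<d}"]; auto simp: PP_def QQ_def)+
  have "Pow {..<d} = PP \<union> QQ" "PP \<inter> QQ = {}" by (auto simp: PP_def QQ_def)
  hence "card PP + card QQ = 2 ^ d" using fPQ card_Pow[of "{..<d}"] by (simp add: card_Un_disjoint)
  hence "real (card PP) + real (card QQ) = N" unfolding N_def by (metis of_nat_add of_nat_numeral of_nat_power)
  hence cQQ: "real (card QQ) = N - C" using cPP by simp
  have "{..<d} \<in> PP" using assms(1) by (auto simp: PP_def)
  hence "card PP > 0" using fPQ card_gt_0_iff by blast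
  hence Cpos: "C > 0" using cPP by simp
  have "{} \<in> QQ" by (auto simp: QQ_def)
  hence "card QQ > 0" using fPQ card_gt_0_iff by blast
  hence NCpos: "N - C > 0" using cQQ by simp
  have Kpos: "K > 0" unfolding K_def using assms(1) by simp
  have e1: "e > 1" unfolding e_def using assms(2) by simp
  have Cd: "C * \<delta> < 1" using assms(4) C_def by simp
  have props: "B * K * (\<alpha> / C - (1 - \<alpha>) / (N - C)) = 1 \<and> 0 \<le> \<alpha> \<and> \<alpha> \<le> 1 \<and> B > 0"
  proof (cases "odd d")
    case True
    have C2: "N = 2 * C" unfolding N_def C_def C_const_def using True assms(1)
      by (simp add: power_Suc[symmetric])
    have dd: "(d - 1) div 2 = d div 2" using True by presburger
    have a: "\<alpha> = (e + C * \<delta>) / (e + 1)" unfolding \<alpha>_def alpha_param_def e_def C_def using True by simp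
    have b: "B = (2 * C + C * (e - 1)) / (K * (e + 2 * C * \<delta> - 1))"
      unfolding B_def B_param_def e_def K_def using True C2 dd C_def by (simp add: N_def mult.assoc)
    have "N - C = 2 * C - C" using C2 by simp
    then show ?thesis unfolding a b using alg_odd[OF e1 Cpos Kpos assms(3) Cd] by simp
  next
    case False
    have a: "\<alpha> = (e * C + \<delta> * C * (N - C)) / ((e - 1) * C + N)"
      unfolding \<alpha>_def alpha_param_def e_def C_def N_def using False by simp
    have b: "B = (N + C * (e - 1)) / (K * (e + N * \<delta> - 1))"
      unfolding B_def B_param_def e_def K_def N_def C_def using False by simp
    have NC: "N > C" using NCpos by simp
    show ?thesis unfolding a b using alg_even[OF e1 Cpos NC Kpos assms(3) Cd] by simp
  qed
  define p where "p = (\<lambda>j. map_pmf (\<lambda>b. if b then 1 else -1 :: real) (bernoulli_pmf (1/2 + x j / 2)))"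
  have Vdef: "V_pmf d x = Pi_pmf {..<d} undefined p" unfolding V_pmf_def p_def ..
  have setV: "set_pmf (V_pmf d x) = PiE_dflt {..<d} undefined (set_pmf \<circ> p)"
    unfolding Vdef by (rule set_Pi_pmf) simp
  have finV: "finite (set_pmf (V_pmf d x))"
    unfolding setV by (rule finite_PiE_dflt) (auto simp: p_def)
  have vV: "\<forall>i<d. V i \<in> {-1, 1}" if "V \<in> set_pmf (V_pmf d x)" for V
    using that unfolding setV by (auto simp: PiE_dflt_def p_def)
  have inner: "measure_pmf.expectation (bind_pmf (bernoulli_pmf \<alpha>) (\<lambda>u.
       if u then pmf_of_set (T_plus d B V) else pmf_of_set (T_minus d B V))) (\<lambda>y. y j) = V j"
    if "V \<in> set_pmf (V_pmf d x)" for V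
    by (rule inner_exp[where C=C and N=N and K=K]) (use props vV[OF that] j cPP cQQ Cpos NCpos in \<open>auto simp: PP_def QQ_def K_def\<close>)
  have "measure_pmf.expectation (mechanism1 d \<epsilon> \<delta> x) (\<lambda>y. y j)
      = (\<Sum>V\<in>set_pmf (V_pmf d x). pmf (V_pmf d x) V * measure_pmf.expectation (bind_pmf (bernoulli_pmf \<alpha>) (\<lambda>u.
       if u then pmf_of_set (T_plus d B V) else pmf_of_set (T_minus d B V))) (\<lambda>y. y j))"
    unfolding mechanism1_def mech_def \<alpha>_def[symmetric] B_def[symmetric]
  proof (rule exp_bind_fin[OF finV subset_refl])
    fix V assume V: "V \<in> set_pmf (V_pmf d x)"
    have fc: "finite (cube d B)" unfolding cube_def by (rule finite_PiE) auto
    have Bp: "B > 0" using props by simp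
    have "card (T_plus d B V) > 0" using T_facts(1)[OF Bp vV[OF V] j] \<open>card PP > 0\<close> by (simp add: PP_def)
    moreover have "card (T_minus d B V) > 0" using T_facts(2)[OF Bp vV[OF V] j] \<open>card QQ > 0\<close> by (simp add: QQ_def)
    ultimately have "finite (T_plus d B V)" "T_plus d B V \<noteq> {}" "finite (T_minus d B V)" "T_minus d B V \<noteq> {}"
      using card_gt_0_iff by blast+
    then have "finite (set_pmf (pmf_of_set (T_plus d B V)))" "finite (set_pmf (pmf_of_set (T_minus d B V)))"
      by simp_all
    then show "finite (set_pmf (bernoulli_pmf \<alpha> \<bind> (\<lambda>u. if u then pmf_of_set (T_plus d B V) else pmf_of_set (T_minus d B V))))"
      by (auto simp: set_bind_pmf)
  qed
  also have "\<dots> = (\<Sum>V\<in>set_pmf (V_pmf d x). pmf (V_pmf d x) V *\<^sub>R V j)"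
    using inner by (simp cong: sum.cong)
  also have "\<dots> = measure_pmf.expectation (V_pmf d x) (\<lambda>V. V j)"
    by (rule integral_measure_pmf[OF finV, symmetric]) auto
  also have "\<dots> = measure_pmf.expectation (map_pmf (\<lambda>f. f j) (V_pmf d x)) (\<lambda>t. t)"
    by simp
  also have "map_pmf (\<lambda>f. f j) (V_pmf d x) = p j"
    unfolding Vdef using Pi_pmf_component[of "{..<d}" j undefined p] j by simp
  also have "measure_pmf.expectation (p j) (\<lambda>t. t) = x j"
  proof -
    have "0 \<le> 1/2 + x j / 2" "1/2 + x j / 2 \<le> 1" using assms(5) j by auto
    then show ?thesis unfolding p_def by (simp add: integral_bernoulli_pmf)
  qed
  finally show "measure_pmf.expectation (mechanism1 d \<epsilon> \<delta> x) (\<lambda>y. y j) = x j" .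
qed


end
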